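(* Let $\{f(\mathbf z;\boldsymbol\theta):\boldsymbol\theta\in\Theta\}$, $\Theta\subset\mathbb{R}^p$, be a family of probability mass or density functions on a sample space $\mathcal Z\subset\mathbb{R}^q$, and let $\mathbf z_1,\dots,\mathbf z_n$ be an i.i.d. sample from $f(\cdot;\boldsymbol\theta_0)$. For each $r\in\mathbb N$ let $\tilde f_r(\mathbf z;\boldsymbol\theta)$ be an approximation of $f(\mathbf z;\boldsymbol\theta)$ (the same approximation for all observations), let $R:\mathbb N\to\mathbb N$, and define $\tilde L_n(\boldsymbol\theta)=\frac1n\sum_{i=1}^n\log\tilde f_{R(n)}(\mathbf z_i;\boldsymbol\theta)$ and $\hat{\boldsymbol\theta}_{MAL}=\arg\max_{\boldsymbol\theta\in\Theta}\tilde L_n(\boldsymbol\theta)$. Assume: (i) for all $\boldsymbol\theta\neq\boldsymbol\theta_0$, $f(\cdot;\boldsymbol\theta)\neq f(\cdot;\boldsymbol\theta_0)$; $\boldsymbol\theta_0\in\Theta$ and $\Theta$ is compact; $\log f(\mathbf z;\boldsymbol\theta)$ is continuous at each $\boldsymbol\theta\in\Theta$ with probability one; and $\mathbb E_{\mathbf z}[\sup_{\boldsymbol\theta\in\Theta}|\log f(\mathbf z;\boldsymbol\theta)|]<\infty$; (ii) there exists $\bar\delta>0$ such that $f(\mathbf z;\boldsymbol\theta)\ge\bar\delta$ for all $\mathbf z\in\mathcal Z$, $\boldsymbol\theta\in\Theta$; (iii) $\lim_{r\to\infty}\sup_{\mathbf z\in\mathcal Z,\boldsymbol\theta\in\Theta}|\tilde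 f_r(\mathbf z;\boldsymbol\theta)-f(\mathbf z;\boldsymbol\theta)|=0$; (iv) $R(n)$ is monotonically increasing in $n$ and $\lim_{n\to\infty}R(n)=\infty$. Then $\hat{\boldsymbol\theta}_{MAL}\to\boldsymbol\theta_0$ in probability. *)

theory Defs
  imports "HOL-Probability.Probability"
begin

definition L_tilde ::
  "(nat \<Rightarrow> 'z \<Rightarrow> 't \<Rightarrow> real) \<Rightarrow> (nat \<Rightarrow> nat) \<Rightarrow> (nat \<Rightarrow> 'a \<Rightarrow> 'z) \<Rightarrow> nat \<Rightarrow> 'a \<Rightarrow> 't \<Rightarrow> real"
  where "L_tilde ftil R Z n \<omega> \<theta> = (1 / real n) * (\<Sum>i<n. ln (ftil (R n) (Z i \<omega>) \<theta>))"

end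

theory Submission
  imports Defs
begin

lemma (in prob_space) iid_bounded_upper:
  fixes Z :: "nat \<Rightarrow> 'a \<Rightarrow> 'b" and h :: "'b \<Rightarrow> real"
  assumes Z_meas: "\<And>i. Z i \<in> measurable M N"
    and indep: "indep_vars (\<lambda>_. N) Z UNIV"
    and distr: "\<And>i. distr M N (Z i) = distr M N (Z 0)"
    and hm: "h \<in> borel_measurable N" and hb: "\<And>x. x \<in> space N \<Longrightarrow> h x \<in> {a..b}" and ab: "a < b"
    and e: "\<epsilon> \<ge> 0" and n: "n > 0"
  shows "prob {\<omega> \<in> space M. (\<Sum>i<n. h (Z i \<omega>)) / n \<ge> expectation (\<lambda>\<omega>. h (Z 0 \<omega>)) + \<epsilon>}
     \<le> exp (-2 * n * \<epsilon>\<^sup>2 / (b-a)\<^sup>2)"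
proof -
  interpret H: Hoeffding_ineq_iid M "{..<n}" "\<lambda>i \<omega>. h (Z i \<omega>)" "\<lambda>\<omega>. h (Z 0 \<omega>)" a b
    "expectation (\<lambda>\<omega>. h (Z 0 \<omega>))"
  proof unfold_locales
    show "indep_vars (\<lambda>_. borel) (\<lambda>i \<omega>. h (Z i \<omega>)) {..<n}"
      by (rule indep_vars_compose2[OF indep_vars_subset[OF indep]]) (auto simp: hm)
    fix i assume "i \<in> {..<n}"
    have "distr M borel (\<lambda>\<omega>. h (Z i \<omega>)) = distr (distr M N (Z i)) borel h"
      using Z_meas hm by (subst distr_distr) (auto simp: comp_def)
    also have "\<dots> = distr (distr M N (Z 0)) borel h" by (subst distr[of i]) (rule refl)
    also have "\<dots> = distr M borel (\<lambda>\<omega>. h (Z 0 \<omega>))"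
      using Z_meas hm by (subst distr_distr) (auto simp: comp_def)
    finally show "distr M borel (\<lambda>\<omega>. h (Z i \<omega>)) = distr M borel (\<lambda>\<omega>. h (Z 0 \<omega>))" .
  next
    show "random_variable borel (\<lambda>\<omega>. h (Z 0 \<omega>))" using Z_meas hm by measurable
  next
    show "AE x in M. h (Z 0 x) \<in> {a..b}"
      using Z_meas hb by (auto intro!: AE_I2 dest: measurable_space)
  qed simp_all
  have "{..<n} \<noteq> {}" using n by auto
  from H.Hoeffding_ineq_ge'[OF e ab this] show ?thesis by simp
qed

lemma (in prob_space) same_exp:
  fixes Z :: "nat \<Rightarrow> 'a \<Rightarrow> 'b" and \<phi> :: "'b \<Rightarrow> real"
  assumes Z_meas: "\<And>i. Z i \<in> measurable M N"
    and distr: "\<And>i. distr M N (Z i) = distr M N (Z 0)"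
    and pm: "\<phi> \<in> borel_measurable N"
  shows "expectation (\<lambda>\<omega>. \<phi> (Z i \<omega>)) = expectation (\<lambda>\<omega>. \<phi> (Z 0 \<omega>))"
    and "integrable M (\<lambda>\<omega>. \<phi> (Z i \<omega>)) = integrable M (\<lambda>\<omega>. \<phi> (Z 0 \<omega>))"
proof -
  have "expectation (\<lambda>\<omega>. \<phi> (Z i \<omega>)) = integral\<^sup>L (distr M N (Z i)) \<phi>"
    using Z_meas pm by (simp add: integral_distr)
  also have "\<dots> = integral\<^sup>L (distr M N (Z 0)) \<phi>" by (subst distr[of i]) (rule refl)
  also have "\<dots> = expectation (\<lambda>\<omega>. \<phi> (Z 0 \<omega>))"
    using Z_meas pm by (simp add: integral_distr)
  finally show "expectation (\<lambda>\<omega>. \<phi> (Z i \<omega>)) = expectation (\<lambda>\<omega>. \<phi> (Z 0 \<omega>))" .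
  have "integrable M (\<lambda>\<omega>. \<phi> (Z i \<omega>)) = integrable (distr M N (Z i)) \<phi>"
    using Z_meas pm by (simp add: integrable_distr_eq)
  also have "\<dots> = integrable (distr M N (Z 0)) \<phi>" by (subst distr[of i]) (rule refl)
  also have "\<dots> = integrable M (\<lambda>\<omega>. \<phi> (Z 0 \<omega>))"
    using Z_meas pm by (simp add: integrable_distr_eq)
  finally show "integrable M (\<lambda>\<omega>. \<phi> (Z i \<omega>)) = integrable M (\<lambda>\<omega>. \<phi> (Z 0 \<omega>))" .
qed

lemma exp_seq_zero:
  fixes a :: real assumes "a > 0"
  shows "(\<lambda>n. exp (- (real n * a))) \<longlonglongrightarrow> 0"
proof -
  have "(\<lambda>n. exp (- a) ^ n) \<longlonglongrightarrow> 0"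
    by (rule LIMSEQ_power_zero) (use assms in auto)
  moreover have "exp (- (real n * a)) = exp (- a) ^ n" for n
    by (simp add: exp_of_nat_mult[symmetric])
  ultimately show ?thesis by simp
qed

lemma (in prob_space) wlln_upper:
  fixes Z :: "nat \<Rightarrow> 'a \<Rightarrow> 'b" and g :: "'b \<Rightarrow> real"
  assumes Z_meas: "\<And>i. Z i \<in> measurable M N"
    and indep: "indep_vars (\<lambda>_. N) Z UNIV"
    and distr: "\<And>i. distr M N (Z i) = distr M N (Z 0)"
    and gm: "g \<in> borel_measurable N" and gi: "integrable M (\<lambda>\<omega>. g (Z 0 \<omega>))"
    and c: "c > 0"
  shows "(\<lambda>n. prob {\<omega> \<in> space M. (\<Sum>i<n. g (Z i \<omega>)) / n \<ge> expectation (\<lambda>\<omega>. g (Z 0 \<omega>)) + c}) \<longlonglongrightarrow> 0"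
proof (rule LIMSEQ_I)
  fix e :: real assume e: "e > 0"
  define gK where "gK K x = max (-K) (min K (g x))" for K :: real and x
  define t where "t K = expectation (\<lambda>\<omega>. \<bar>g (Z 0 \<omega>) - gK K (Z 0 \<omega>)\<bar>)" for K
  have gKm[measurable]: "gK K \<in> borel_measurable N" for K unfolding gK_def using gm by measurable
  have gm'[measurable]: "(\<lambda>\<omega>. g (Z i \<omega>)) \<in> borel_measurable M" for i using Z_meas gm by measurable
  have gKm'[measurable]: "(\<lambda>\<omega>. gK K (Z i \<omega>)) \<in> borel_measurable M" for K i using Z_meas gKm by measurable
  have gi': "integrable M (\<lambda>\<omega>. g (Z i \<omega>))" for i using same_exp(2)[where Z=Z and N=N, OF Z_meas distr gm] gi by simp
  have gKi: "integrable M (\<lambda>\<omega>. gK K (Z i \<omega>))" if "K \<ge> 0" for K i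
    by (rule Bochner_Integration.integrable_bound[OF gi'[of i]]) (use that in \<open>auto simp: gK_def\<close>)
  have hi: "integrable M (\<lambda>\<omega>. \<bar>g (Z i \<omega>) - gK K (Z i \<omega>)\<bar>)" if "K \<ge> 0" for K i
    using gi' gKi that by auto
  have t_lim: "(\<lambda>k. t (real k + 1)) \<longlonglongrightarrow> 0"
  proof -
    have "(\<lambda>k. expectation (\<lambda>\<omega>. \<bar>g (Z 0 \<omega>) - gK (real k + 1) (Z 0 \<omega>)\<bar>)) \<longlonglongrightarrow> expectation (\<lambda>\<omega>. 0)"
    proof (rule integral_dominated_convergence[where w="\<lambda>\<omega>. \<bar>g (Z 0 \<omega>)\<bar>"])
      show "integrable M (\<lambda>\<omega>. \<bar>g (Z 0 \<omega>)\<bar>)" using gi by auto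
      show "AE x in M. (\<lambda>k. \<bar>g (Z 0 x) - gK (real k + 1) (Z 0 x)\<bar>) \<longlonglongrightarrow> 0"
      proof (rule AE_I2, rule tendsto_eventually)
        fix x
        obtain k0 :: nat where "\<bar>g (Z 0 x)\<bar> \<le> real k0" using real_arch_simple by blast
        then show "\<forall>\<^sub>F k in sequentially. \<bar>g (Z 0 x) - gK (real k + 1) (Z 0 x)\<bar> = 0"
          unfolding eventually_sequentially gK_def by (intro exI[of _ k0]) auto
      qed
      show "AE x in M. norm \<bar>g (Z 0 x) - gK (real k + 1) (Z 0 x)\<bar> \<le> \<bar>g (Z 0 x)\<bar>" for k
        by (rule AE_I2) (auto simp: gK_def)
    qed auto
    then show ?thesis by (simp add: t_def)
  qed
  have "min (c/4) (e*c/8) > 0" using c e by auto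
  from order_tendstoD(2)[OF t_lim this] obtain k where
    tk: "t (real k + 1) < min (c/4) (e*c/8)" by (auto simp: eventually_sequentially)
  define K where "K = real k + 1"
  have K: "K > 0" unfolding K_def by auto
  have tK: "t K < c/4" "t K < e*c/8" using tk unfolding K_def by auto
  have "(\<lambda>n. exp (- (real n * (2 * (c/2)\<^sup>2 / (K - - K)\<^sup>2)))) \<longlonglongrightarrow> 0"
    by (rule exp_seq_zero) (use c K in auto)
  from order_tendstoD(2)[OF this, of "e/2"] e obtain n0 where
    n0: "\<And>n. n \<ge> n0 \<Longrightarrow> exp (- (real n * (2 * (c/2)\<^sup>2 / (K - - K)\<^sup>2))) < e/2"
    by (auto simp: eventually_sequentially)
  show "\<exists>no. \<forall>n\<ge>no. norm (prob {\<omega> \<in> space M. (\<Sum>i<n. g (Z i \<omega>)) / n \<ge> expectation (\<lambda>\<omega>. g (Z 0 \<omega>)) + c} - 0) < e"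
  proof (intro exI[of _ "max n0 1"] allI impI)
    fix n assume n: "max n0 1 \<le> n"
    then have npos: "n > 0" by auto
    let ?m = "expectation (\<lambda>\<omega>. g (Z 0 \<omega>))"
    let ?mK = "expectation (\<lambda>\<omega>. gK K (Z 0 \<omega>))"
    define A where "A = {\<omega> \<in> space M. (\<Sum>i<n. gK K (Z i \<omega>)) / n \<ge> ?mK + c/2}"
    define B where "B = {\<omega> \<in> space M. (\<Sum>i<n. \<bar>g (Z i \<omega>) - gK K (Z i \<omega>)\<bar>) / n \<ge> c/4}"
    define E where "E = {\<omega> \<in> space M. (\<Sum>i<n. g (Z i \<omega>)) / n \<ge> ?m + c}"
    have mm: "?m \<ge> ?mK - t K"
    proof -
      have "?m - ?mK = expectation (\<lambda>\<omega>. g (Z 0 \<omega>) - gK K (Z 0 \<omega>))"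
        using gi gKi[of K 0] K by simp
      also have "\<dots> \<ge> - t K" unfolding t_def
        using integral_abs_bound[of M "\<lambda>\<omega>. g (Z 0 \<omega>) - gK K (Z 0 \<omega>)"] by (simp add: abs_le_iff)
      finally show ?thesis by simp
    qed
    have sub: "E \<subseteq> A \<union> B"
    proof
      fix \<omega> assume "\<omega> \<in> E"
      then have w: "\<omega> \<in> space M" and Ew: "(\<Sum>i<n. g (Z i \<omega>)) / n \<ge> ?m + c" unfolding E_def by auto
      show "\<omega> \<in> A \<union> B"
      proof (rule ccontr)
        assume "\<omega> \<notin> A \<union> B"
        then have a: "(\<Sum>i<n. gK K (Z i \<omega>)) / n < ?mK + c/2"
          and b: "(\<Sum>i<n. \<bar>g (Z i \<omega>) - gK K (Z i \<omega>)\<bar>) / n < c/4"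
          using w unfolding A_def B_def by auto
        have "(\<Sum>i<n. g (Z i \<omega>)) = (\<Sum>i<n. gK K (Z i \<omega>)) + (\<Sum>i<n. g (Z i \<omega>) - gK K (Z i \<omega>))"
          by (simp add: sum_subtractf)
        also have "\<dots> \<le> (\<Sum>i<n. gK K (Z i \<omega>)) + (\<Sum>i<n. \<bar>g (Z i \<omega>) - gK K (Z i \<omega>)\<bar>)"
          by (intro add_left_mono sum_mono) auto
        finally have "(\<Sum>i<n. g (Z i \<omega>)) / n \<le> (\<Sum>i<n. gK K (Z i \<omega>)) / n + (\<Sum>i<n. \<bar>g (Z i \<omega>) - gK K (Z i \<omega>)\<bar>) / n"
          using npos by (simp add: add_divide_distrib[symmetric] divide_right_mono)
        with a b Ew mm tK(1) show False by linarith
      qed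
    qed
    have Em: "E \<in> events" unfolding E_def by measurable
    have Am: "A \<in> events" unfolding A_def by measurable
    have Bm: "B \<in> events" unfolding B_def by measurable
    have PA: "prob A \<le> exp (-2 * real n * (c/2)\<^sup>2 / (K - - K)\<^sup>2)"
      unfolding A_def
      by (rule iid_bounded_upper[OF Z_meas indep distr gKm]) (use c K npos in \<open>auto simp: gK_def\<close>)
    also have "\<dots> = exp (- (real n * (2 * (c/2)\<^sup>2 / (K - - K)\<^sup>2)))" by simp
    also have "\<dots> < e/2" using n0 n by auto
    finally have PA': "prob A < e/2" .
    have PB: "prob B \<le> expectation (\<lambda>\<omega>. (\<Sum>i<n. \<bar>g (Z i \<omega>) - gK K (Z i \<omega>)\<bar>) / n) / (c/4)"
      unfolding B_def
      by (rule integral_Markov_inequality_measure[where A="space M"]) (use hi K c in auto)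
    also have "expectation (\<lambda>\<omega>. (\<Sum>i<n. \<bar>g (Z i \<omega>) - gK K (Z i \<omega>)\<bar>) / n) = t K"
    proof -
      have "expectation (\<lambda>\<omega>. (\<Sum>i<n. \<bar>g (Z i \<omega>) - gK K (Z i \<omega>)\<bar>) / n)
          = (\<Sum>i<n. expectation (\<lambda>\<omega>. \<bar>g (Z i \<omega>) - gK K (Z i \<omega>)\<bar>)) / n"
        using hi K by (simp add: Bochner_Integration.integral_sum)
      also have "\<dots> = (\<Sum>i<n. t K) / n"
      proof -
        have hmN: "(\<lambda>x. \<bar>g x - gK K x\<bar>) \<in> borel_measurable N" using gm gKm by measurable
        have eqi: "expectation (\<lambda>\<omega>. \<bar>g (Z i \<omega>) - gK K (Z i \<omega>)\<bar>) = t K" for i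
          using same_exp(1)[where Z=Z and N=N, OF Z_meas distr hmN] unfolding t_def .
        show ?thesis by (simp add: eqi)
      qed
      also have "\<dots> = t K" using npos by simp
      finally show ?thesis .
    qed
    finally have "prob B \<le> t K / (c/4)" .
    also have "\<dots> < e/2" using tK(2) c by (simp add: field_simps)
    finally have PB': "prob B < e/2" .
    have "prob E \<le> prob (A \<union> B)" using sub Am Bm by (intro finite_measure_mono) auto
    also have "\<dots> \<le> prob A + prob B" using Am Bm by (rule measure_Un_le)
    finally have "prob E < e" using PA' PB' by linarith
    then show "norm (prob {\<omega> \<in> space M. (\<Sum>i<n. g (Z i \<omega>)) / n \<ge> ?m + c} - 0) < e"
      unfolding E_def by simp
  qed
qed



lemma closure_bound:
  fixes h :: "'b::metric_space \<Rightarrow> real"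
  assumes hc: "continuous_on S h" and CS: "C \<subseteq> S" and SC: "S \<subseteq> closure C" and U: "open U"
    and x: "x \<in> S" "x \<in> U" and b: "\<And>c. c \<in> C \<Longrightarrow> c \<in> U \<Longrightarrow> h c \<le> b"
  shows "h x \<le> b"
proof -
  have "x \<in> closure (U \<inter> C)" using open_Int_closure_subset[OF U, of C] x SC by auto
  then obtain s where s: "\<And>n. s n \<in> U \<inter> C" "s \<longlonglongrightarrow> x" unfolding closure_sequential by blast
  have "(\<lambda>n. h (s n)) \<longlonglongrightarrow> h x"
    by (rule continuous_on_tendsto_compose[OF hc s(2) x(1)]) (use s(1) CS in \<open>auto intro!: always_eventually\<close>)
  then show ?thesis by (rule LIMSEQ_le_const2) (use s(1) b in auto)
qed

lemma ln_diff_bound: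
  fixes a b m :: real
  assumes "0 < m" "m \<le> a" "m \<le> b"
  shows "\<bar>ln a - ln b\<bar> \<le> \<bar>a - b\<bar> / m"
proof -
  have 1: "ln a - ln b \<le> \<bar>a - b\<bar> / m"
    if "0 < m" "m \<le> a" "m \<le> b" for a b :: real
  proof -
    have "ln a - ln b = ln (a / b)" using that by (simp add: ln_div)
    also have "\<dots> \<le> a / b - 1" using that by (intro ln_le_minus_one) auto
    also have "\<dots> = (a - b) / b" using that by (simp add: field_simps)
    also have "\<dots> \<le> \<bar>a - b\<bar> / b" using that by (intro divide_right_mono) auto
    also have "\<dots> \<le> \<bar>a - b\<bar> / m" using that by (intro divide_left_mono) auto
    finally show ?thesis .
  qed
  show ?thesis using 1[of a b] 1[of b a] assms by (auto simp: abs_minus_commute)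
qed



locale mal = prob_space M for M :: "'a measure" +
  fixes \<mu> :: "(real^'q::finite) measure"
    and \<Theta> :: "(real^'p::finite) set"
    and \<theta>0 :: "real^'p"
    and f :: "real^'q \<Rightarrow> real^'p \<Rightarrow> real"
    and Z :: "nat \<Rightarrow> 'a \<Rightarrow> real^'q"
    and C :: "(real^'p) set"
    and \<delta> :: real
  assumes dens_meas: "\<And>\<theta>. \<theta> \<in> \<Theta> \<Longrightarrow> (\<lambda>z. f z \<theta>) \<in> borel_measurable \<mu>"
    and dens_nonneg: "\<And>\<theta> z. \<theta> \<in> \<Theta> \<Longrightarrow> z \<in> space \<mu> \<Longrightarrow> 0 \<le> f z \<theta>"
    and dens_one: "\<And>\<theta>. \<theta> \<in> \<Theta> \<Longrightarrow> (\<integral>\<^sup>+ z. ennreal (f z \<theta>) \<partial>\<mu>) = 1"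
    and Z_meas: "\<And>i. Z i \<in> measurable M \<mu>"
    and Z_indep: "indep_vars (\<lambda>_. \<mu>) Z UNIV"
    and Z_distr: "\<And>i. distr M \<mu> (Z i) = density \<mu> (\<lambda>z. ennreal (f z \<theta>0))"
    and ident: "\<And>\<theta>. \<theta> \<in> \<Theta> \<Longrightarrow> \<theta> \<noteq> \<theta>0 \<Longrightarrow> \<not> (AE z in \<mu>. f z \<theta> = f z \<theta>0)"
    and theta0_in: "\<theta>0 \<in> \<Theta>"
    and cont: "AE z in density \<mu> (\<lambda>z. ennreal (f z \<theta>0)). continuous_on \<Theta> (\<lambda>\<theta>. ln (f z \<theta>))"
    and dom: "(\<integral>\<^sup>+ z. (SUP \<theta>\<in>\<Theta>. ennreal \<bar>ln (f z \<theta>)\<bar>) \<partial>(density \<mu> (\<lambda>z. ennreal (f z \<theta>0)))) < \<infinity>"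
    and delta_pos: "\<delta> > 0"
    and delta_le: "\<And>z \<theta>. z \<in> space \<mu> \<Longrightarrow> \<theta> \<in> \<Theta> \<Longrightarrow> f z \<theta> \<ge> \<delta>"
    and C_count: "countable C" and C_sub: "C \<subseteq> \<Theta>" and C_dense: "\<Theta> \<subseteq> closure C"
begin

definition "P0 = density \<mu> (\<lambda>z. ennreal (f z \<theta>0))"
definition "Dsup z = (SUP c\<in>C. ennreal \<bar>ln (f z c)\<bar>)"
definition "D z = enn2real (Dsup z)"
definition "G = {z \<in> space \<mu>. continuous_on \<Theta> (\<lambda>\<theta>. ln (f z \<theta>)) \<and> Dsup z < \<infinity>}"

lemma P0_distr: "distr M \<mu> (Z i) = P0" unfolding P0_def by (rule Z_distr)

lemma P0_prob: "prob_space P0"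
  unfolding P0_distr[symmetric, of 0] by (rule prob_space_distr[OF Z_meas])

lemma sets_P0[simp]: "sets P0 = sets \<mu>" and space_P0[simp]: "space P0 = space \<mu>"
  unfolding P0_def by auto

lemma meas_P0_iff[simp]: "g \<in> borel_measurable P0 \<longleftrightarrow> g \<in> borel_measurable \<mu>"
  unfolding P0_def by simp

lemma ll_meas[measurable]: "\<theta> \<in> \<Theta> \<Longrightarrow> (\<lambda>z. ln (f z \<theta>)) \<in> borel_measurable \<mu>"
  using dens_meas by measurable

lemma Dsup_meas[measurable]: "Dsup \<in> borel_measurable \<mu>"
  unfolding Dsup_def using C_count C_sub by (intro borel_measurable_SUP) auto

lemma D_meas[measurable]: "D \<in> borel_measurable \<mu>"
  unfolding D_def by measurable

lemma Dsup_int: "(\<integral>\<^sup>+ z. Dsup z \<partial>P0) < \<infinity>"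
proof -
  have "(\<integral>\<^sup>+ z. Dsup z \<partial>P0) \<le> (\<integral>\<^sup>+ z. (SUP \<theta>\<in>\<Theta>. ennreal \<bar>ln (f z \<theta>)\<bar>) \<partial>P0)"
    unfolding Dsup_def using C_sub by (intro nn_integral_mono SUP_subset_mono) auto
  also have "\<dots> < \<infinity>" using dom unfolding P0_def .
  finally show ?thesis .
qed

lemma AE_G: "AE z in P0. z \<in> G"
proof -
  have "AE z in P0. Dsup z \<noteq> \<infinity>"
    by (rule nn_integral_PInf_AE) (use Dsup_int in auto)
  moreover have "AE z in P0. continuous_on \<Theta> (\<lambda>\<theta>. ln (f z \<theta>))" using cont unfolding P0_def .
  moreover have "AE z in P0. z \<in> space \<mu>" using AE_space[of P0] by simp
  ultimately show ?thesis unfolding G_def by eventually_elim (auto simp: less_top)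
qed

lemma G_C_bound: assumes "z \<in> G" "c \<in> C" shows "\<bar>ln (f z c)\<bar> \<le> D z"
proof -
  have "ennreal \<bar>ln (f z c)\<bar> \<le> Dsup z" unfolding Dsup_def using assms(2) by (rule SUP_upper)
  moreover have "Dsup z < top" using assms(1) unfolding G_def by auto
  ultimately have "enn2real (ennreal \<bar>ln (f z c)\<bar>) \<le> enn2real (Dsup z)" by (rule enn2real_mono)
  then show ?thesis unfolding D_def by simp
qed

lemma G_bound: assumes "z \<in> G" "\<theta> \<in> \<Theta>" shows "\<bar>ln (f z \<theta>)\<bar> \<le> D z"
proof (rule closure_bound[where S=\<Theta> and C=C and U=UNIV])
  show "continuous_on \<Theta> (\<lambda>\<theta>. \<bar>ln (f z \<theta>)\<bar>)"
    using assms(1) unfolding G_def by (auto intro: continuous_on_rabs)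
qed (use assms C_sub C_dense G_C_bound in auto)

lemma D_integrable: "integrable P0 D"
proof (rule integrableI_nonneg)
  show "D \<in> borel_measurable P0" by simp
  show "AE x in P0. 0 \<le> D x" by (simp add: D_def)
  have "(\<integral>\<^sup>+ x. ennreal (D x) \<partial>P0) \<le> (\<integral>\<^sup>+ z. Dsup z \<partial>P0)"
    unfolding D_def by (intro nn_integral_mono) (auto simp: ennreal_enn2real_if)
  then show "(\<integral>\<^sup>+ x. ennreal (D x) \<partial>P0) < \<infinity>" using Dsup_int by simp
qed

lemma ll_integrable: assumes "\<theta> \<in> \<Theta>" shows "integrable P0 (\<lambda>z. ln (f z \<theta>))"
proof (rule Bochner_Integration.integrable_bound[OF D_integrable])
  show "(\<lambda>z. ln (f z \<theta>)) \<in> borel_measurable P0" using assms by simp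
  show "AE x in P0. norm (ln (f x \<theta>)) \<le> norm (D x)"
    using AE_G by eventually_elim (use G_bound assms in \<open>auto simp: D_def\<close>)
qed

end


context mal begin

lemma f_pos: "z \<in> space \<mu> \<Longrightarrow> \<theta> \<in> \<Theta> \<Longrightarrow> f z \<theta> > 0"
  using delta_le[of z \<theta>] delta_pos by linarith

lemma KL:
  assumes th: "\<theta> \<in> \<Theta>" "\<theta> \<noteq> \<theta>0"
  shows "integral\<^sup>L P0 (\<lambda>z. ln (f z \<theta>)) < integral\<^sup>L P0 (\<lambda>z. ln (f z \<theta>0))"
proof -
  interpret P: prob_space P0 by (rule P0_prob)
  define r where "r z = f z \<theta> / f z \<theta>0" for z
  have [measurable]: "(\<lambda>z. f z \<theta>) \<in> borel_measurable \<mu>" "(\<lambda>z. f z \<theta>0) \<in> borel_measurable \<mu>"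
    using dens_meas th theta0_in by auto
  have rm[measurable]: "r \<in> borel_measurable \<mu>" unfolding r_def by measurable
  have fi: "integrable \<mu> (\<lambda>z. f z \<theta>)"
    by (rule integrableI_nonneg) (use dens_one[OF th(1)] dens_nonneg[OF th(1)] in auto)
  have fint: "integral\<^sup>L \<mu> (\<lambda>z. f z \<theta>) = 1"
    by (subst integral_eq_nn_integral) (use dens_one[OF th(1)] dens_nonneg[OF th(1)] in auto)
  have eqf: "z \<in> space \<mu> \<Longrightarrow> f z \<theta>0 * r z = f z \<theta>" for z
    using f_pos[of z \<theta>0] theta0_in by (simp add: r_def)
  have g0: "AE z in \<mu>. 0 \<le> f z \<theta>0" using dens_nonneg theta0_in by auto
  have ri: "integrable P0 r"
    unfolding P0_def
  proof (subst integrable_density)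
    have "integrable \<mu> (\<lambda>z. f z \<theta>0 *\<^sub>R r z) = integrable \<mu> (\<lambda>z. f z \<theta>)"
      by (rule Bochner_Integration.integrable_cong) (auto simp: eqf)
    then show "integrable \<mu> (\<lambda>z. f z \<theta>0 *\<^sub>R r z)" using fi by simp
  qed (use g0 in auto)
  have rint: "integral\<^sup>L P0 r = 1"
  proof -
    have "integral\<^sup>L P0 r = integral\<^sup>L \<mu> (\<lambda>z. f z \<theta>0 *\<^sub>R r z)"
      unfolding P0_def by (rule integral_density) (use g0 in auto)
    also have "\<dots> = integral\<^sup>L \<mu> (\<lambda>z. f z \<theta>)" by (rule Bochner_Integration.integral_cong) (auto simp: eqf)
    finally show ?thesis using fint by simp
  qed
  define h where "h z = r z - 1 - (ln (f z \<theta>) - ln (f z \<theta>0))" for z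
  have hr: "z \<in> space \<mu> \<Longrightarrow> h z = r z - 1 - ln (r z)" for z
    using f_pos[of z \<theta>] f_pos[of z \<theta>0] th theta0_in by (simp add: h_def r_def ln_div)
  have rpos: "z \<in> space \<mu> \<Longrightarrow> r z > 0" for z
    using f_pos[of z \<theta>] f_pos[of z \<theta>0] th theta0_in by (simp add: r_def)
  have hnn: "AE z in P0. 0 \<le> h z"
    by (rule AE_I2) (use hr rpos ln_le_minus_one in fastforce)
  have hi: "integrable P0 h" unfolding h_def
    using ri ll_integrable[OF th(1)] ll_integrable[OF theta0_in] by auto
  have hint: "integral\<^sup>L P0 h = integral\<^sup>L P0 (\<lambda>z. ln (f z \<theta>0)) - integral\<^sup>L P0 (\<lambda>z. ln (f z \<theta>))"
    unfolding h_def
    using ri ll_integrable[OF th(1)] ll_integrable[OF theta0_in] rint P.prob_space by simp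
  have "integral\<^sup>L P0 h \<ge> 0" using hnn by (rule integral_nonneg_AE)
  moreover have "integral\<^sup>L P0 h \<noteq> 0"
  proof
    assume "integral\<^sup>L P0 h = 0"
    then have "AE z in P0. h z = 0" using integral_nonneg_eq_0_iff_AE[OF hi hnn] by simp
    then have "AE z in P0. f z \<theta> = f z \<theta>0"
    proof (rule AE_mp, intro AE_I2 impI)
      fix z assume z: "z \<in> space P0" "h z = 0"
      then have "ln (r z) = r z - 1" using hr by simp
      then have "r z = 1" using ln_eq_minus_one rpos z by auto
      then show "f z \<theta> = f z \<theta>0" using f_pos[of z \<theta>0] theta0_in z by (auto simp: r_def)
    qed
    then have "AE z in \<mu>. 0 < ennreal (f z \<theta>0) \<longrightarrow> f z \<theta> = f z \<theta>0"
      unfolding P0_def by (subst (asm) AE_density) auto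
    then have "AE z in \<mu>. f z \<theta> = f z \<theta>0"
      by (rule AE_mp) (use f_pos theta0_in in \<open>auto intro!: AE_I2\<close>)
    then show False using ident th by blast
  qed
  ultimately show ?thesis using hint by linarith
qed

end


context mal begin

definition "Y \<theta>1 \<rho> z = (SUP c \<in> C \<inter> ball \<theta>1 \<rho>. min (D z) (ln (f z c)))"

lemma Y_bdd: "bdd_above ((\<lambda>c. min (D z) (ln (f z c))) ` (C \<inter> ball \<theta>1 \<rho>))"
  by (rule bdd_aboveI[of _ "D z"]) auto

lemma Y_meas[measurable]: "Y \<theta>1 \<rho> \<in> borel_measurable \<mu>"
  unfolding Y_def
proof (rule borel_measurable_cSUP)
  show "countable (C \<inter> ball \<theta>1 \<rho>)" using C_count by auto
  fix c assume "c \<in> C \<inter> ball \<theta>1 \<rho>"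
  then have "c \<in> \<Theta>" using C_sub by auto
  then show "(\<lambda>z. min (D z) (ln (f z c))) \<in> borel_measurable \<mu>" by measurable
qed (rule Y_bdd)

lemma C_ball_ne: assumes "\<theta>1 \<in> \<Theta>" "\<rho> > 0" shows "C \<inter> ball \<theta>1 \<rho> \<noteq> {}"
proof -
  have "\<theta>1 \<in> ball \<theta>1 \<rho> \<inter> closure C" using assms C_dense by auto
  then have "ball \<theta>1 \<rho> \<inter> closure C \<noteq> {}" by blast
  then show ?thesis using open_Int_closure_eq_empty[of "ball \<theta>1 \<rho>" C] by auto
qed

lemma Y_le_D: assumes "\<theta>1 \<in> \<Theta>" "\<rho> > 0" shows "Y \<theta>1 \<rho> z \<le> D z"
  unfolding Y_def using C_ball_ne[OF assms] by (intro cSUP_least) auto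

lemma Y_ge: assumes z: "z \<in> G" and th: "\<theta> \<in> \<Theta>" "\<theta> \<in> ball \<theta>1 \<rho>"
  shows "ln (f z \<theta>) \<le> Y \<theta>1 \<rho> z"
proof (rule closure_bound[where S=\<Theta> and C=C and U="ball \<theta>1 \<rho>"])
  show "continuous_on \<Theta> (\<lambda>\<theta>. ln (f z \<theta>))" using z unfolding G_def by auto
  fix c assume c: "c \<in> C" "c \<in> ball \<theta>1 \<rho>"
  have "ln (f z c) = min (D z) (ln (f z c))" using G_C_bound[OF z c(1)] by auto
  also have "\<dots> \<le> Y \<theta>1 \<rho> z" unfolding Y_def by (rule cSUP_upper[OF _ Y_bdd]) (use c in auto)
  finally show "ln (f z c) \<le> Y \<theta>1 \<rho> z" .
qed (use th C_sub C_dense in auto)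

lemma Y_abs: assumes z: "z \<in> G" and th: "\<theta>1 \<in> \<Theta>" "\<rho> > 0" shows "\<bar>Y \<theta>1 \<rho> z\<bar> \<le> D z"
proof -
  have "ln (f z \<theta>1) \<le> Y \<theta>1 \<rho> z" by (rule Y_ge[OF z th(1)]) (use th in auto)
  moreover have "\<bar>ln (f z \<theta>1)\<bar> \<le> D z" by (rule G_bound[OF z th(1)])
  moreover have "Y \<theta>1 \<rho> z \<le> D z" by (rule Y_le_D[OF th])
  ultimately show ?thesis by linarith
qed

lemma Y_lim: assumes z: "z \<in> G" and th: "\<theta>1 \<in> \<Theta>"
  shows "(\<lambda>k. Y \<theta>1 (1 / (real k + 1)) z) \<longlonglongrightarrow> ln (f z \<theta>1)"
proof (rule LIMSEQ_I)
  fix e :: real assume e: "e > 0"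
  have "continuous_on \<Theta> (\<lambda>\<theta>. ln (f z \<theta>))" using z unfolding G_def by auto
  then obtain d where d: "d > 0" "\<And>\<theta>. \<theta> \<in> \<Theta> \<Longrightarrow> dist \<theta> \<theta>1 < d \<Longrightarrow> dist (ln (f z \<theta>)) (ln (f z \<theta>1)) < e/2"
    unfolding continuous_on_iff using th e by (metis half_gt_zero)
  obtain N :: nat where N: "inverse (real (Suc N)) < d" using reals_Archimedean[OF d(1)] by blast
  show "\<exists>no. \<forall>k\<ge>no. norm (Y \<theta>1 (1 / (real k + 1)) z - ln (f z \<theta>1)) < e"
  proof (intro exI[of _ N] allI impI)
    fix k assume k: "N \<le> k"
    have rk: "1 / (real k + 1) \<le> inverse (real (Suc N))" using k by (simp add: field_simps)
    have lo: "ln (f z \<theta>1) \<le> Y \<theta>1 (1 / (real k + 1)) z" by (rule Y_ge[OF z th]) auto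
    have hi: "Y \<theta>1 (1 / (real k + 1)) z \<le> ln (f z \<theta>1) + e/2"
      unfolding Y_def
    proof (rule cSUP_least)
      show "C \<inter> ball \<theta>1 (1 / (real k + 1)) \<noteq> {}" by (rule C_ball_ne[OF th]) auto
      fix c assume c: "c \<in> C \<inter> ball \<theta>1 (1 / (real k + 1))"
      then have "c \<in> \<Theta>" "dist c \<theta>1 < d" using C_sub rk N by (auto simp: dist_commute)
      then have "dist (ln (f z c)) (ln (f z \<theta>1)) < e/2" using d(2)[of c] by blast
      then have A: "\<bar>ln (f z c) - ln (f z \<theta>1)\<bar> < e/2" by (simp only: dist_real_def)
      have "ln (f z c) - ln (f z \<theta>1) \<le> \<bar>ln (f z c) - ln (f z \<theta>1)\<bar>" by (rule abs_ge_self)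
      with A have "ln (f z c) \<le> ln (f z \<theta>1) + e/2" by linarith
      then show "min (D z) (ln (f z c)) \<le> ln (f z \<theta>1) + e/2" by auto
    qed
    show "norm (Y \<theta>1 (1 / (real k + 1)) z - ln (f z \<theta>1)) < e" using lo hi e by auto
  qed
qed

lemma Y_integrable: assumes "\<theta>1 \<in> \<Theta>" "\<rho> > 0" shows "integrable P0 (Y \<theta>1 \<rho>)"
proof (rule Bochner_Integration.integrable_bound[OF D_integrable])
  show "Y \<theta>1 \<rho> \<in> borel_measurable P0" by simp
  show "AE x in P0. norm (Y \<theta>1 \<rho> x) \<le> norm (D x)"
    using AE_G by eventually_elim (use Y_abs assms in \<open>auto simp: D_def\<close>)
qed

lemma exists_rho:
  assumes th: "\<theta>1 \<in> \<Theta>" "\<theta>1 \<noteq> \<theta>0"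
  shows "\<exists>\<rho>>0. integral\<^sup>L P0 (Y \<theta>1 \<rho>) < integral\<^sup>L P0 (\<lambda>z. ln (f z \<theta>0))"
proof -
  have "(\<lambda>k. integral\<^sup>L P0 (Y \<theta>1 (1 / (real k + 1)))) \<longlonglongrightarrow> integral\<^sup>L P0 (\<lambda>z. ln (f z \<theta>1))"
  proof (rule integral_dominated_convergence[where w=D])
    show "(\<lambda>z. ln (f z \<theta>1)) \<in> borel_measurable P0" using th by simp
    show "AE x in P0. (\<lambda>k. Y \<theta>1 (1 / (real k + 1)) x) \<longlonglongrightarrow> ln (f x \<theta>1)"
      using AE_G by eventually_elim (use Y_lim th in auto)
    show "AE x in P0. norm (Y \<theta>1 (1 / (real k + 1)) x) \<le> D x" for k
      using AE_G by eventually_elim (use Y_abs th in auto)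
  qed (auto simp: D_integrable)
  from order_tendstoD(2)[OF this KL[OF th]] obtain k where
    "integral\<^sup>L P0 (Y \<theta>1 (1 / (real k + 1))) < integral\<^sup>L P0 (\<lambda>z. ln (f z \<theta>0))"
    by (auto simp: eventually_sequentially)
  moreover have "1 / (real k + 1) > 0" by auto
  ultimately show ?thesis by blast
qed

end


context mal begin

lemma AE_all_G: "AE \<omega> in M. \<forall>i. Z i \<omega> \<in> G"
proof -
  from AE_G obtain N where N: "{z \<in> space P0. z \<notin> G} \<subseteq> N" "emeasure P0 N = 0" "N \<in> sets P0"
    by (rule AE_E)
  have "AE z in P0. z \<notin> N" by (rule AE_not_in) (use N in auto)
  then have "AE \<omega> in M. Z i \<omega> \<notin> N" for i
    unfolding P0_distr[symmetric, of i]
    by (subst (asm) AE_distr_iff[OF Z_meas]) (use N in auto)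
  then have "AE \<omega> in M. \<forall>i. Z i \<omega> \<notin> N" by (simp add: AE_all_countable)
  then show ?thesis
  proof (rule AE_mp, intro AE_I2 impI allI)
    fix \<omega> i assume "\<omega> \<in> space M" "\<forall>i. Z i \<omega> \<notin> N"
    moreover have "Z i \<omega> \<in> space \<mu>" using Z_meas \<open>\<omega> \<in> space M\<close> by (auto dest: measurable_space)
    ultimately show "Z i \<omega> \<in> G" using N(1) by auto
  qed
qed

lemma approx_ln:
  fixes ftil :: "nat \<Rightarrow> real^'q \<Rightarrow> real^'p \<Rightarrow> real" and R :: "nat \<Rightarrow> nat"
  assumes approx: "(\<lambda>r. SUP (z, \<theta>) \<in> space \<mu> \<times> \<Theta>. ereal \<bar>ftil r z \<theta> - f z \<theta>\<bar>) \<longlonglongrightarrow> 0"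
    and R_lim: "filterlim R at_top at_top" and eta: "\<eta> > 0"
  shows "\<exists>n1. \<forall>n\<ge>n1. \<forall>z\<in>space \<mu>. \<forall>\<theta>\<in>\<Theta>. \<bar>ln (ftil (R n) z \<theta>) - ln (f z \<theta>)\<bar> \<le> \<eta>"
proof -
  define \<rho>0 where "\<rho>0 = min (\<delta>/2) (\<delta>*\<eta>/2)"
  have \<rho>0: "\<rho>0 > 0" using delta_pos eta by (simp add: \<rho>0_def)
  from order_tendstoD(2)[OF approx, of "ereal \<rho>0"] \<rho>0 obtain r0 where
    r0: "\<And>r. r \<ge> r0 \<Longrightarrow> (SUP (z, \<theta>) \<in> space \<mu> \<times> \<Theta>. ereal \<bar>ftil r z \<theta> - f z \<theta>\<bar>) < ereal \<rho>0"
    by (auto simp: eventually_sequentially)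
  from filterlim_at_top[THEN iffD1, OF R_lim, rule_format, of r0] obtain n1 where
    n1: "\<And>n. n \<ge> n1 \<Longrightarrow> R n \<ge> r0" by (auto simp: eventually_sequentially)
  show ?thesis
  proof (intro exI[of _ n1] allI impI ballI)
    fix n z \<theta> assume n: "n1 \<le> n" and z: "z \<in> space \<mu>" and th: "\<theta> \<in> \<Theta>"
    have "ereal \<bar>ftil (R n) z \<theta> - f z \<theta>\<bar> \<le> (SUP (z, \<theta>) \<in> space \<mu> \<times> \<Theta>. ereal \<bar>ftil (R n) z \<theta> - f z \<theta>\<bar>)"
      using SUP_upper[of "(z, \<theta>)" "space \<mu> \<times> \<Theta>" "\<lambda>(z, \<theta>). ereal \<bar>ftil (R n) z \<theta> - f z \<theta>\<bar>"] z th by auto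
    also have "\<dots> < ereal \<rho>0" using r0 n1 n by auto
    finally have d: "\<bar>ftil (R n) z \<theta> - f z \<theta>\<bar> < \<rho>0" by simp
    have fd: "f z \<theta> \<ge> \<delta>" using delta_le z th by auto
    have "\<rho>0 \<le> \<delta>/2" "\<rho>0 \<le> \<delta>*\<eta>/2" unfolding \<rho>0_def by auto
    then have m1: "\<delta>/2 \<le> ftil (R n) z \<theta>" and m2: "\<delta>/2 \<le> f z \<theta>" using d fd by auto
    have "\<bar>ln (ftil (R n) z \<theta>) - ln (f z \<theta>)\<bar> \<le> \<bar>ftil (R n) z \<theta> - f z \<theta>\<bar> / (\<delta>/2)"
      by (rule ln_diff_bound) (use delta_pos m1 m2 in auto)
    also have "\<dots> \<le> (\<delta>*\<eta>/2) / (\<delta>/2)"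
      using d \<open>\<rho>0 \<le> \<delta>*\<eta>/2\<close> delta_pos by (intro divide_right_mono) auto
    also have "\<dots> = \<eta>" using delta_pos by (simp add: field_simps)
    finally show "\<bar>ln (ftil (R n) z \<theta>) - ln (f z \<theta>)\<bar> \<le> \<eta>" .
  qed
qed

end


context mal begin

lemma consistency:
  fixes ftil :: "nat \<Rightarrow> real^'q \<Rightarrow> real^'p \<Rightarrow> real" and R :: "nat \<Rightarrow> nat"
    and \<theta>hat :: "nat \<Rightarrow> 'a \<Rightarrow> real^'p"
  assumes compact: "compact \<Theta>"
    and approx: "(\<lambda>r. SUP (z, \<theta>) \<in> space \<mu> \<times> \<Theta>. ereal \<bar>ftil r z \<theta> - f z \<theta>\<bar>) \<longlonglongrightarrow> 0"
    and R_lim: "filterlim R at_top at_top"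
    and thetahat_meas: "\<And>n. \<theta>hat n \<in> borel_measurable M"
    and thetahat_in: "\<And>n \<omega>. \<omega> \<in> space M \<Longrightarrow> \<theta>hat n \<omega> \<in> \<Theta>"
    and thetahat_max: "\<And>n \<omega> \<theta>. \<omega> \<in> space M \<Longrightarrow> \<theta> \<in> \<Theta> \<Longrightarrow>
        L_tilde ftil R Z n \<omega> \<theta> \<le> L_tilde ftil R Z n \<omega> (\<theta>hat n \<omega>)"
    and eps: "\<epsilon> > 0"
  shows "(\<lambda>n. measure M {\<omega> \<in> space M. dist (\<theta>hat n \<omega>) \<theta>0 > \<epsilon>}) \<longlonglongrightarrow> 0"
proof -
  define Kset where "Kset = \<Theta> \<inter> {\<theta>. \<epsilon> \<le> dist \<theta> \<theta>0}"
  have "closed {\<theta>. \<epsilon> \<le> dist \<theta> \<theta>0}" by (intro closed_Collect_le continuous_intros)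
  then have Kc: "compact Kset" unfolding Kset_def using compact by (intro compact_Int_closed)
  have "\<forall>\<theta>1\<in>Kset. \<exists>\<rho>>0. integral\<^sup>L P0 (Y \<theta>1 \<rho>) < integral\<^sup>L P0 (\<lambda>z. ln (f z \<theta>0))"
  proof
    fix \<theta>1 assume "\<theta>1 \<in> Kset"
    then have "\<theta>1 \<in> \<Theta>" "\<theta>1 \<noteq> \<theta>0" using eps unfolding Kset_def by auto
    then show "\<exists>\<rho>>0. integral\<^sup>L P0 (Y \<theta>1 \<rho>) < integral\<^sup>L P0 (\<lambda>z. ln (f z \<theta>0))" by (rule exists_rho)
  qed
  then obtain rho where rho: "\<And>\<theta>1. \<theta>1 \<in> Kset \<Longrightarrow> rho \<theta>1 > 0"
    "\<And>\<theta>1. \<theta>1 \<in> Kset \<Longrightarrow> integral\<^sup>L P0 (Y \<theta>1 (rho \<theta>1)) < integral\<^sup>L P0 (\<lambda>z. ln (f z \<theta>0))"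
    by metis
  have "Kset \<subseteq> (\<Union>\<theta>1\<in>Kset. ball \<theta>1 (rho \<theta>1))" using rho(1) by auto
  from compactE_image[OF Kc _ this] obtain F where
    F: "F \<subseteq> Kset" "finite F" "Kset \<subseteq> (\<Union>\<theta>1\<in>F. ball \<theta>1 (rho \<theta>1))" by auto
  have FT: "j \<in> F \<Longrightarrow> j \<in> \<Theta>" for j using F(1) unfolding Kset_def by auto
  define gap where "gap j = integral\<^sup>L P0 (\<lambda>z. ln (f z \<theta>0)) - integral\<^sup>L P0 (Y j (rho j))" for j
  define \<gamma> where "\<gamma> = Min (insert 1 (gap ` F))"
  have gap_pos: "j \<in> F \<Longrightarrow> gap j > 0" for j using rho(2) F(1) unfolding gap_def by auto
  have \<gamma>pos: "\<gamma> > 0" unfolding \<gamma>_def using F(2) gap_pos by (subst Min_gr_iff) auto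
  have \<gamma>le: "j \<in> F \<Longrightarrow> \<gamma> \<le> gap j" for j unfolding \<gamma>_def using F(2) by (intro Min_le) auto
  define W where "W j z = Y j (rho j) z - ln (f z \<theta>0)" for j z
  have Wm: "W j \<in> borel_measurable \<mu>" for j unfolding W_def using theta0_in by measurable
  have WP0: "j \<in> F \<Longrightarrow> integrable P0 (W j)" for j
    unfolding W_def using Y_integrable[OF FT, of j "rho j"] rho(1) F(1) ll_integrable[OF theta0_in] by auto
  have WM: "j \<in> F \<Longrightarrow> integrable M (\<lambda>\<omega>. W j (Z 0 \<omega>))" for j
    using WP0[of j] unfolding P0_distr[symmetric, of 0] by (subst (asm) integrable_distr_eq[OF Z_meas Wm])
  have WE: "j \<in> F \<Longrightarrow> expectation (\<lambda>\<omega>. W j (Z 0 \<omega>)) = - gap j" for j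
  proof -
    assume j: "j \<in> F"
    have "expectation (\<lambda>\<omega>. W j (Z 0 \<omega>)) = integral\<^sup>L P0 (W j)"
      unfolding P0_distr[symmetric, of 0] by (rule integral_distr[symmetric, OF Z_meas Wm])
    also have "\<dots> = - gap j"
      unfolding W_def gap_def using Y_integrable[OF FT[OF j], of "rho j"] rho(1) F(1) j ll_integrable[OF theta0_in] by auto
    finally show ?thesis .
  qed
  define E where "E j n = {\<omega> \<in> space M. (\<Sum>i<n. W j (Z i \<omega>)) / n \<ge> expectation (\<lambda>\<omega>. W j (Z 0 \<omega>)) + \<gamma>/2}" for j n
  have Em: "E j n \<in> events" for j n unfolding E_def using Z_meas Wm by measurable
  have Elim: "(\<lambda>n. \<Sum>j\<in>F. prob (E j n)) \<longlonglongrightarrow> 0"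
  proof (rule tendsto_null_sum)
    fix j assume j: "j \<in> F"
    have "distr M \<mu> (Z i) = distr M \<mu> (Z 0)" for i using P0_distr by simp
    then show "(\<lambda>n. prob (E j n)) \<longlonglongrightarrow> 0"
      unfolding E_def using wlln_upper[OF Z_meas Z_indep _ Wm WM[OF j], of "\<gamma>/2"] \<gamma>pos by auto
  qed
  define \<eta> where "\<eta> = \<gamma>/4"
  have \<eta>: "\<eta> > 0" using \<gamma>pos by (simp add: \<eta>_def)
  from approx_ln[OF approx R_lim \<eta>] obtain n1 where
    n1: "\<And>n z \<theta>. n \<ge> n1 \<Longrightarrow> z \<in> space \<mu> \<Longrightarrow> \<theta> \<in> \<Theta> \<Longrightarrow> \<bar>ln (ftil (R n) z \<theta>) - ln (f z \<theta>)\<bar> \<le> \<eta>"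
    by blast
  define A where "A n = {\<omega> \<in> space M. dist (\<theta>hat n \<omega>) \<theta>0 > \<epsilon>}" for n
  have Am: "A n \<in> events" for n unfolding A_def using thetahat_meas by measurable
  have key: "measure M (A n) \<le> (\<Sum>j\<in>F. prob (E j n))" if n: "n \<ge> max n1 1" for n
  proof -
    have npos: "n > 0" using n by auto
    have "AE \<omega> in M. \<omega> \<in> A n \<longrightarrow> \<omega> \<in> (\<Union>j\<in>F. E j n)"
      using AE_all_G
    proof (rule AE_mp, intro AE_I2 impI)
      fix \<omega> assume w: "\<omega> \<in> space M" and G: "\<forall>i. Z i \<omega> \<in> G" and wA: "\<omega> \<in> A n"
      define th where "th = \<theta>hat n \<omega>"
      have thT: "th \<in> \<Theta>" unfolding th_def using thetahat_in w by auto
      have "th \<in> Kset" using wA thT unfolding A_def Kset_def th_def by auto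
      then obtain j where j: "j \<in> F" "th \<in> ball j (rho j)" using F(3) by auto
      have Zs: "Z i \<omega> \<in> space \<mu>" for i using Z_meas w by (auto dest: measurable_space)
      define S where "S \<theta> = (\<Sum>i<n. ln (f (Z i \<omega>) \<theta>))" for \<theta>
      define T where "T \<theta> = (\<Sum>i<n. ln (ftil (R n) (Z i \<omega>) \<theta>))" for \<theta>
      have TS: "\<bar>T \<theta> - S \<theta>\<bar> \<le> n * \<eta>" if "\<theta> \<in> \<Theta>" for \<theta>
      proof -
        have "\<bar>T \<theta> - S \<theta>\<bar> = \<bar>\<Sum>i<n. ln (ftil (R n) (Z i \<omega>) \<theta>) - ln (f (Z i \<omega>) \<theta>)\<bar>"
          unfolding T_def S_def by (simp add: sum_subtractf)
        also have "\<dots> \<le> (\<Sum>i<n. \<bar>ln (ftil (R n) (Z i \<omega>) \<theta>) - ln (f (Z i \<omega>) \<theta>)\<bar>)" by (rule sum_abs)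
        also have "\<dots> \<le> (\<Sum>i<n. \<eta>)" using n1[OF _ Zs that] n by (intro sum_mono) auto
        finally show ?thesis by simp
      qed
      have "T \<theta>0 / n \<le> T th / n"
        using thetahat_max[OF w theta0_in, of n] unfolding L_tilde_def T_def th_def by simp
      then have Tle: "T \<theta>0 \<le> T th" using npos by (simp add: divide_le_cancel)
      have SY: "S th \<le> (\<Sum>i<n. Y j (rho j) (Z i \<omega>))"
        unfolding S_def by (intro sum_mono Y_ge) (use G thT j in auto)
      have "(\<Sum>i<n. W j (Z i \<omega>)) = (\<Sum>i<n. Y j (rho j) (Z i \<omega>)) - S \<theta>0"
        unfolding W_def S_def by (simp add: sum_subtractf)
      also have "\<dots> \<ge> S th - S \<theta>0" using SY by simp
      finally have "(\<Sum>i<n. W j (Z i \<omega>)) \<ge> - (2 * n * \<eta>)"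
        using TS[OF thT] TS[OF theta0_in] Tle by (simp add: abs_le_iff)
      then have "(\<Sum>i<n. W j (Z i \<omega>)) / n \<ge> - (2 * n * \<eta>) / n"
        using npos by (intro divide_right_mono) auto
      also have "- (2 * n * \<eta>) / n = - \<gamma>/2" using npos by (simp add: \<eta>_def)
      finally have "(\<Sum>i<n. W j (Z i \<omega>)) / n \<ge> - \<gamma>/2" .
      moreover have "expectation (\<lambda>\<omega>. W j (Z 0 \<omega>)) + \<gamma>/2 \<le> - \<gamma>/2"
        using WE[OF j(1)] \<gamma>le[OF j(1)] by simp
      ultimately have "\<omega> \<in> E j n" unfolding E_def using w by auto
      then show "\<omega> \<in> (\<Union>j\<in>F. E j n)" using j by auto
    qed
    then have "measure M (A n) \<le> measure M (\<Union>j\<in>F. E j n)"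
      by (rule finite_measure_mono_AE) (use F(2) Em in auto)
    also have "\<dots> \<le> (\<Sum>j\<in>F. prob (E j n))"
      by (rule finite_measure_subadditive_finite) (use F(2) Em in auto)
    finally show ?thesis .
  qed
  show ?thesis
    unfolding A_def[symmetric]
  proof (rule tendsto_sandwich[OF _ _ tendsto_const Elim])
    show "\<forall>\<^sub>F n in sequentially. 0 \<le> measure M (A n)" by simp
    show "\<forall>\<^sub>F n in sequentially. measure M (A n) \<le> (\<Sum>j\<in>F. prob (E j n))"
      unfolding eventually_sequentially using key by blast
  qed
qed

end


theorem theorem7:
  fixes M :: "'a measure"
    and \<mu> :: "(real^'q::finite) measure"
    and \<Theta> :: "(real^'p::finite) set"
    and \<theta>0 :: "real^'p"
    and f :: "real^'q \<Rightarrow> real^'p \<Rightarrow> real"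
    and ftil :: "nat \<Rightarrow> real^'q \<Rightarrow> real^'p \<Rightarrow> real"
    and R :: "nat \<Rightarrow> nat"
    and Z :: "nat \<Rightarrow> 'a \<Rightarrow> real^'q"
    and \<theta>hat :: "nat \<Rightarrow> 'a \<Rightarrow> real^'p"
  assumes prob: "prob_space M"
    \<comment> \<open>family of densities (w.r.t. the base measure \<mu> on the sample space space \<mu>)\<close>
    and dens_meas: "\<And>\<theta>. \<theta> \<in> \<Theta> \<Longrightarrow> (\<lambda>z. f z \<theta>) \<in> borel_measurable \<mu>"
    and dens_nonneg: "\<And>\<theta> z. \<theta> \<in> \<Theta> \<Longrightarrow> z \<in> space \<mu> \<Longrightarrow> 0 \<le> f z \<theta>"
    and dens_one: "\<And>\<theta>. \<theta> \<in> \<Theta> \<Longrightarrow> (\<integral>\<^sup>+ z. ennreal (f z \<theta>) \<partial>\<mu>) = 1"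
    \<comment> \<open>i.i.d. sample from f(.;\<theta>0)\<close>
    and Z_meas: "\<And>i. Z i \<in> measurable M \<mu>"
    and Z_indep: "prob_space.indep_vars M (\<lambda>_. \<mu>) Z UNIV"
    and Z_distr: "\<And>i. distr M \<mu> (Z i) = density \<mu> (\<lambda>z. ennreal (f z \<theta>0))"
    \<comment> \<open>(i)\<close>
    and ident: "\<And>\<theta>. \<theta> \<in> \<Theta> \<Longrightarrow> \<theta> \<noteq> \<theta>0 \<Longrightarrow> \<not> (AE z in \<mu>. f z \<theta> = f z \<theta>0)"
    and theta0_in: "\<theta>0 \<in> \<Theta>"
    and compact: "compact \<Theta>"
    and cont: "AE z in density \<mu> (\<lambda>z. ennreal (f z \<theta>0)). continuous_on \<Theta> (\<lambda>\<theta>. ln (f z \<theta>))"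
    and dom: "(\<integral>\<^sup>+ z. (SUP \<theta>\<in>\<Theta>. ennreal \<bar>ln (f z \<theta>)\<bar>) \<partial>(density \<mu> (\<lambda>z. ennreal (f z \<theta>0)))) < \<infinity>"
    \<comment> \<open>(ii)\<close>
    and delta: "\<delta> > 0" "\<And>z \<theta>. z \<in> space \<mu> \<Longrightarrow> \<theta> \<in> \<Theta> \<Longrightarrow> f z \<theta> \<ge> \<delta>"
    \<comment> \<open>(iii)\<close>
    and approx: "(\<lambda>r. SUP (z, \<theta>) \<in> space \<mu> \<times> \<Theta>. ereal \<bar>ftil r z \<theta> - f z \<theta>\<bar>) \<longlonglongrightarrow> 0"
    \<comment> \<open>(iv)\<close>
    and R_mono: "mono R"
    and R_lim: "filterlim R at_top at_top"
    \<comment> \<open>\<theta>hat n is a (measurable) maximiser of the approximate log-likelihood over \<Theta>\<close>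
    and thetahat_meas: "\<And>n. \<theta>hat n \<in> borel_measurable M"
    and thetahat_in: "\<And>n \<omega>. \<omega> \<in> space M \<Longrightarrow> \<theta>hat n \<omega> \<in> \<Theta>"
    and thetahat_max: "\<And>n \<omega> \<theta>. \<omega> \<in> space M \<Longrightarrow> \<theta> \<in> \<Theta> \<Longrightarrow>
        L_tilde ftil R Z n \<omega> \<theta> \<le> L_tilde ftil R Z n \<omega> (\<theta>hat n \<omega>)"
  shows "\<forall>\<epsilon>>0. (\<lambda>n. measure M {\<omega> \<in> space M. dist (\<theta>hat n \<omega>) \<theta>0 > \<epsilon>}) \<longlonglongrightarrow> 0"
proof -
  interpret prob_space M by (rule prob)
  obtain C where C: "countable C" "C \<subseteq> \<Theta>" "\<Theta> \<subseteq> closure C" by (rule separable)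
  interpret mal M \<mu> \<Theta> \<theta>0 f Z C \<delta>
    by unfold_locales (use dens_meas dens_nonneg dens_one Z_meas Z_indep Z_distr ident theta0_in cont dom delta C in auto)
  show ?thesis
    using consistency[OF compact approx R_lim thetahat_meas thetahat_in thetahat_max] by blast
qed

end
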